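(* Let $\epsilon>0$, $n\ge1$, let $\mathbf{w}\in\mathbb{R}^d$ be non-increasing, and let $1\le k\le d-1$ with $\mathbf{w}^k_{max}>\mathbf{w}^k_{min}$. For the additive mechanism with parameters $(\epsilon,\mathbf{w},k)$, $$\mathrm{risk}_{\mathrm{MM}}=\frac{k|a_k-b_k|+(d-k)|b_k|}{n},\qquad\mathrm{risk}_{\mathrm{EM}}=\frac{k|a_k-b_k|+(d-k)|b_k|}{n}\ \text{(for every input vote)},\qquad\mathrm{risk}_{\mathrm{DD}}\le2k|a_k|.$$
   Context: Candidates are $C_1,\dots,C_d$; a vote is a linear ordering; the scored vote $v$ assigns score $w_j$ to the candidate at rank $j$. Let $\mathcal{C}^k$ be the set of $k$-element subsets of candidates, $\mathbf{w}^k_{max}=\sum_{j=1}^kw_j$, $\mathbf{w}^k_{min}=\sum_{j=d-k+1}^dw_j$, $W=\sum_jw_j$. The additive mechanism on input $v$ outputs $S\in\mathcal{C}^k$ with probability $$\Pr[S\mid v]=\frac{\sum_{C_{j'}\in S}v_{j'}-\mathbf{w}^k_{min}}{\mathbf{w}^k_{max}-\mathbf{w}^k_{min}}\cdot\frac{e^\epsilon-1}{\Phi}+\frac1\Phi,\qquad \Phi=\binom dk\frac{\frac kd(e^\epsilon-1)W-e^\epsilon\mathbf{w}^k_{min}+\mathbf{w}^k_{max}}{\mathbf{w}^k_{max}-\mathbf{w}^k_{min}},$$ and releases the private view $\tilde v_j=a_k[C_j\in S]-b_k$, where $a_k=\big[W(e^\epsilon-1)-\tfrac dke^\epsilon\mathbf{w}^k_{min}+\tfrac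 dk\mathbf{w}^k_{max}\big]\frac{d-1}{(d-k)(e^\epsilon-1)}$ and $b_k=\big[\tfrac{(k-1)(e^\epsilon-1)}{d-1}W-e^\epsilon\mathbf{w}^k_{min}+\mathbf{w}^k_{max}\big]\frac{d-1}{(d-k)(e^\epsilon-1)}$. Let $\mathcal{D}_{\tilde v}$ be the set of all possible private views, $n$ the number of voters. Risk metrics: $\mathrm{risk}_{\mathrm{MM}}=\max_{\tilde v\in\mathcal{D}_{\tilde v}}\frac{|\tilde v|_1}{n}$; $\mathrm{risk}_{\mathrm{EM}}=\mathbb{E}[\frac{|\tilde v|_1}{n}]$ over the mechanism's randomness for a given input; $\mathrm{risk}_{\mathrm{DD}}=\max_{\tilde v,\tilde v'\in\mathcal{D}_{\tilde v}}|\tilde v-\tilde v'|_1$. *)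

theory Defs
  imports Complex_Main
begin

text \<open>Candidates are indexed by 1..d, ranks by 1..d. Scores w : nat => real, w j = score at rank j.
A vote (linear ordering) is a bijection sigma of {1..d}; sigma j is the rank of candidate C_j.\<close>

definition wmax :: "(nat \<Rightarrow> real) \<Rightarrow> nat \<Rightarrow> nat \<Rightarrow> real" where
  "wmax w d k = (\<Sum>j=1..k. w j)"

definition wmin :: "(nat \<Rightarrow> real) \<Rightarrow> nat \<Rightarrow> nat \<Rightarrow> real" where
  "wmin w d k = (\<Sum>j=d-k+1..d. w j)"

definition Wtot :: "(nat \<Rightarrow> real) \<Rightarrow> nat \<Rightarrow> real" where
  "Wtot w d = (\<Sum>j=1..d. w j)"

definition is_vote :: "nat \<Rightarrow> (nat \<Rightarrow> nat) \<Rightarrow> bool" where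
  "is_vote d \<sigma> \<longleftrightarrow> bij_betw \<sigma> {1..d} {1..d}"

definition scored_vote :: "(nat \<Rightarrow> real) \<Rightarrow> (nat \<Rightarrow> nat) \<Rightarrow> nat \<Rightarrow> real" where
  "scored_vote w \<sigma> j = w (\<sigma> j)"

definition committees :: "nat \<Rightarrow> nat \<Rightarrow> nat set set" where
  "committees d k = {S. S \<subseteq> {1..d} \<and> card S = k}"

definition Phi :: "real \<Rightarrow> (nat \<Rightarrow> real) \<Rightarrow> nat \<Rightarrow> nat \<Rightarrow> real" where
  "Phi \<epsilon> w d k = real (d choose k) *
     ((real k / real d) * (exp \<epsilon> - 1) * Wtot w d - exp \<epsilon> * wmin w d k + wmax w d k)
     / (wmax w d k - wmin w d k)"

definition prob_add :: "real \<Rightarrow> (nat \<Rightarrow> real) \<Rightarrow> nat \<Rightarrow> nat \<Rightarrow> (nat \<Rightarrow> real) \<Rightarrow> nat set \<Rightarrow> real" where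
  "prob_add \<epsilon> w d k v S =
     ((\<Sum>j\<in>S. v j) - wmin w d k) / (wmax w d k - wmin w d k) * (exp \<epsilon> - 1) / Phi \<epsilon> w d k
     + 1 / Phi \<epsilon> w d k"

definition a_k :: "real \<Rightarrow> (nat \<Rightarrow> real) \<Rightarrow> nat \<Rightarrow> nat \<Rightarrow> real" where
  "a_k \<epsilon> w d k = (Wtot w d * (exp \<epsilon> - 1) - (real d / real k) * exp \<epsilon> * wmin w d k
       + (real d / real k) * wmax w d k) * (real d - 1) / ((real d - real k) * (exp \<epsilon> - 1))"

definition b_k :: "real \<Rightarrow> (nat \<Rightarrow> real) \<Rightarrow> nat \<Rightarrow> nat \<Rightarrow> real" where
  "b_k \<epsilon> w d k = ((real k - 1) * (exp \<epsilon> - 1) / (real d - 1) * Wtot w d - exp \<epsilon> * wmin w d k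
       + wmax w d k) * (real d - 1) / ((real d - real k) * (exp \<epsilon> - 1))"

definition priv_view :: "real \<Rightarrow> (nat \<Rightarrow> real) \<Rightarrow> nat \<Rightarrow> nat \<Rightarrow> nat set \<Rightarrow> nat \<Rightarrow> real" where
  "priv_view \<epsilon> w d k S j = a_k \<epsilon> w d k * (if j \<in> S then 1 else 0) - b_k \<epsilon> w d k"

definition l1 :: "nat \<Rightarrow> (nat \<Rightarrow> real) \<Rightarrow> real" where
  "l1 d x = (\<Sum>j=1..d. \<bar>x j\<bar>)"

definition views :: "real \<Rightarrow> (nat \<Rightarrow> real) \<Rightarrow> nat \<Rightarrow> nat \<Rightarrow> (nat \<Rightarrow> real) set" where
  "views \<epsilon> w d k = priv_view \<epsilon> w d k ` committees d k"

definition risk_MM :: "real \<Rightarrow> (nat \<Rightarrow> real) \<Rightarrow> nat \<Rightarrow> nat \<Rightarrow> nat \<Rightarrow> real" where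
  "risk_MM \<epsilon> w d k n = Max ((\<lambda>x. l1 d x / real n) ` views \<epsilon> w d k)"

definition risk_EM :: "real \<Rightarrow> (nat \<Rightarrow> real) \<Rightarrow> nat \<Rightarrow> nat \<Rightarrow> nat \<Rightarrow> (nat \<Rightarrow> real) \<Rightarrow> real" where
  "risk_EM \<epsilon> w d k n v =
     (\<Sum>S\<in>committees d k. prob_add \<epsilon> w d k v S * (l1 d (priv_view \<epsilon> w d k S) / real n))"

definition risk_DD :: "real \<Rightarrow> (nat \<Rightarrow> real) \<Rightarrow> nat \<Rightarrow> nat \<Rightarrow> real" where
  "risk_DD \<epsilon> w d k = Max ((\<lambda>(x, y). l1 d (\<lambda>j. x j - y j)) ` (views \<epsilon> w d k \<times> views \<epsilon> w d k))"

end

theory Submission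
  imports Defs
begin

lemma l1_view:
  assumes "S \<subseteq> {1..d}" "card S = k"
  shows "(\<Sum>j=1..d. \<bar>a * (if j \<in> S then 1 else 0) - b\<bar>) = real k * \<bar>a - b\<bar> + real (d - k) * \<bar>b::real\<bar>"
proof -
  have f: "finite {1..d}" by simp
  have "(\<Sum>j=1..d. \<bar>a * (if j \<in> S then 1 else 0) - b\<bar>)
     = (\<Sum>j\<in>{1..d} - S. \<bar>a * (if j \<in> S then 1 else 0) - b\<bar>) + (\<Sum>j\<in>S. \<bar>a * (if j \<in> S then 1 else 0) - b\<bar>)"
    by (rule sum.subset_diff[OF assms(1) f])
  also have "(\<Sum>j\<in>S. \<bar>a * (if j \<in> S then 1 else 0) - b\<bar>) = (\<Sum>j\<in>S. \<bar>a - b\<bar>)" by simp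
  also have "(\<Sum>j\<in>{1..d} - S. \<bar>a * (if j \<in> S then 1 else 0) - b\<bar>) = (\<Sum>j\<in>{1..d} - S. \<bar>b\<bar>)" by simp
  finally show ?thesis using assms by (simp add: card_Diff_subset finite_subset)
qed

lemma card_contain:
  assumes "j \<in> {1..d}" "k \<ge> 1"
  shows "card {S \<in> committees d k. j \<in> S} = (d - 1 choose (k - 1))"
proof -
  have fin: "finite (committees d k)" unfolding committees_def
    by (rule finite_subset[of _ "Pow {1..d}"]) auto
  have c1: "card (committees d k) = d choose k"
    unfolding committees_def using n_subsets[of "{1..d}" k] by simp
  have eq: "{S \<in> committees d k. j \<notin> S} = {S. S \<subseteq> {1..d} - {j} \<and> card S = k}"
    unfolding committees_def by auto
  have c2: "card {S \<in> committees d k. j \<notin> S} = (d - 1 choose k)"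
    unfolding eq using n_subsets[of "{1..d} - {j}" k] assms by simp
  have "card (committees d k) = card {S \<in> committees d k. j \<in> S} + card {S \<in> committees d k. j \<notin> S}"
  proof -
    have u: "committees d k = {S \<in> committees d k. j \<in> S} \<union> {S \<in> committees d k. j \<notin> S}" by auto
    show ?thesis by (subst u, rule card_Un_disjoint) (use fin in auto)
  qed
  moreover have "d choose k = (d - 1 choose (k - 1)) + (d - 1 choose k)"
    using assms by (cases d; cases k) auto
  ultimately show ?thesis using c1 c2 by simp
qed

lemma fin_comm: "finite (committees d k)" unfolding committees_def
  by (rule finite_subset[of _ "Pow {1..d}"]) auto

lemma card_committees: "card (committees d k) = d choose k"
  unfolding committees_def using n_subsets[of "{1..d}" k] by simp

lemma sum_committees:
  assumes "k \<ge> 1"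
  shows "(\<Sum>S\<in>committees d k. \<Sum>j\<in>S. v j) = real (d - 1 choose (k - 1)) * (\<Sum>j=1..d. (v j::real))"
proof -
  have "(\<Sum>S\<in>committees d k. \<Sum>j\<in>S. v j) = (\<Sum>S\<in>committees d k. \<Sum>j\<in>{1..d}. if j \<in> S then v j else 0)"
  proof (rule sum.cong[OF refl])
    fix S assume "S \<in> committees d k"
    then have "S \<subseteq> {1..d}" unfolding committees_def by auto
    then have "{1..d} \<inter> S = S" by auto
    then show "(\<Sum>j\<in>S. v j) = (\<Sum>j\<in>{1..d}. if j \<in> S then v j else 0)"
      using sum.inter_restrict[of "{1..d}" v S] by simp
  qed
  also have "\<dots> = (\<Sum>j\<in>{1..d}. \<Sum>S\<in>committees d k. if j \<in> S then v j else 0)"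
    by (rule sum.swap)
  also have "\<dots> = (\<Sum>j\<in>{1..d}. v j * real (d - 1 choose (k - 1)))"
  proof (rule sum.cong[OF refl])
    fix j assume j: "j \<in> {1..d}"
    have "(\<Sum>S\<in>committees d k. if j \<in> S then v j else 0) = (\<Sum>S\<in>{S \<in> committees d k. j \<in> S}. v j)"
      using sum.inter_filter[OF fin_comm[of d k], of "\<lambda>_. v j" "\<lambda>S. j \<in> S"] by simp
    also have "\<dots> = v j * real (d - 1 choose (k - 1))"
      using card_contain[OF j assms] by simp
    finally show "(\<Sum>S\<in>committees d k. if j \<in> S then v j else 0) = v j * real (d - 1 choose (k - 1))" .
  qed
  finally show ?thesis by (simp add: sum_distrib_right mult.commute)
qed

lemma wmin_bound:
  assumes mono: "\<And>i j. 1 \<le> i \<Longrightarrow> i \<le> j \<Longrightarrow> j \<le> d \<Longrightarrow> w j \<le> w i"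
    and k: "1 \<le> k" "k \<le> d - 1"
  shows "real d * wmin w d k \<le> real k * Wtot w d"
proof -
  define m where "m = d - k"
  have m1: "m \<ge> 1" "m + 1 \<le> d" "d = m + k" using k unfolding m_def by auto
  define c where "c = w (m + 1)"
  have u: "{1..d} = {1..m} \<union> {m+1..d}" using m1 by auto
  have W: "Wtot w d = (\<Sum>j=1..m. w j) + (\<Sum>j=m+1..d. w j)"
    unfolding Wtot_def by (subst u, rule sum.union_disjoint) auto
  have "d - k + 1 = m + 1" unfolding m_def by simp
  then have wm: "wmin w d k = (\<Sum>j=m+1..d. w j)" unfolding wmin_def by simp
  have t1: "c \<le> w j" if "j \<in> {1..m}" for j unfolding c_def using m1 that by (intro mono) auto
  have b1: "w j \<le> c" if "j \<in> {m+1..d}" for j unfolding c_def using m1 that by (intro mono) auto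
  have top: "(\<Sum>j=1..m. w j) \<ge> (\<Sum>j=1..m. c)"
    by (rule sum_mono) (rule t1)
  have bot: "(\<Sum>j=m+1..d. w j) \<le> (\<Sum>j=m+1..d. c)"
    by (rule sum_mono) (rule b1)
  have ct: "(\<Sum>j=1..m. c) = real m * c" by simp
  have cb: "(\<Sum>j=m+1..d. c) = real k * c" using m1 by simp
  have "real k * (\<Sum>j=1..m. w j) \<ge> real k * (real m * c)"
    using top ct by (intro mult_left_mono) auto
  moreover have "real m * (\<Sum>j=m+1..d. w j) \<le> real m * (real k * c)"
    using bot cb by (intro mult_left_mono) auto
  moreover have "real d = real m + real k" using m1 by simp
  moreover have "real k * (real m * c) = real m * (real k * c)" by simp
  ultimately have "real m * (\<Sum>j=m+1..d. w j) \<le> real k * (\<Sum>j=1..m. w j)" by linarith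
  then show ?thesis unfolding W wm \<open>real d = real m + real k\<close>
    by (simp add: distrib_right distrib_left)
qed

lemma l1_committee:
  assumes "S \<in> committees d k"
  shows "l1 d (priv_view \<epsilon> w d k S) =
     real k * \<bar>a_k \<epsilon> w d k - b_k \<epsilon> w d k\<bar> + real (d - k) * \<bar>b_k \<epsilon> w d k\<bar>"
  using assms l1_view[of S d k "a_k \<epsilon> w d k" "b_k \<epsilon> w d k"]
  unfolding l1_def priv_view_def committees_def by simp

lemma comm_nonempty: "k \<le> d \<Longrightarrow> {1..k} \<in> committees d k"
  unfolding committees_def by auto

lemma l1_diff:
  assumes "S \<in> committees d k" "T \<in> committees d k"
  shows "l1 d (\<lambda>j. priv_view \<epsilon> w d k S j - priv_view \<epsilon> w d k T j) \<le> 2 * real k * \<bar>a_k \<epsilon> w d k\<bar>"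
proof -
  let ?a = "a_k \<epsilon> w d k"
  have ST: "S \<subseteq> {1..d}" "T \<subseteq> {1..d}" "card S = k" "card T = k"
    using assms unfolding committees_def by auto
  have "l1 d (\<lambda>j. priv_view \<epsilon> w d k S j - priv_view \<epsilon> w d k T j)
      = (\<Sum>j=1..d. \<bar>?a\<bar> * \<bar>(if j \<in> S then 1 else 0) - (if j \<in> T then 1 else (0::real))\<bar>)"
    unfolding l1_def priv_view_def by (rule sum.cong) (auto simp: abs_mult)
  also have "\<dots> \<le> (\<Sum>j=1..d. \<bar>?a\<bar> * ((if j \<in> S then 1 else 0) + (if j \<in> T then 1 else (0::real))))"
    by (rule sum_mono, rule mult_left_mono) auto
  also have "\<dots> = \<bar>?a\<bar> * ((\<Sum>j=1..d. (if j \<in> S then 1 else 0)) + (\<Sum>j=1..d. (if j \<in> T then 1 else (0::real))))"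
    by (simp only: distrib_left sum.distrib sum_distrib_left)
  also have "(\<Sum>j=1..d. (if j \<in> S then 1 else (0::real))) = real k"
  proof -
    have "(\<Sum>j\<in>{1..d} \<inter> S. (1::real)) = (\<Sum>j=1..d. (if j \<in> S then 1 else (0::real)))"
      by (rule sum.inter_restrict) simp
    then have "(\<Sum>j=1..d. (if j \<in> S then 1 else (0::real))) = (\<Sum>j\<in>{1..d} \<inter> S. 1)" by simp
    also have "{1..d} \<inter> S = S" using ST by auto
    finally show ?thesis using ST by simp
  qed
  also have "(\<Sum>j=1..d. (if j \<in> T then 1 else (0::real))) = real k"
  proof -
    have "(\<Sum>j\<in>{1..d} \<inter> T. (1::real)) = (\<Sum>j=1..d. (if j \<in> T then 1 else (0::real)))"
      by (rule sum.inter_restrict) simp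
    then have "(\<Sum>j=1..d. (if j \<in> T then 1 else (0::real))) = (\<Sum>j\<in>{1..d} \<inter> T. 1)" by simp
    also have "{1..d} \<inter> T = T" using ST by auto
    finally show ?thesis using ST by simp
  qed
  finally show ?thesis by (simp add: mult.commute)
qed

lemma alg1: "M - m > 0 \<Longrightarrow> P > 0 \<Longrightarrow> (X - m) / (M - m) * E / P + 1 / P = X * (E / ((M - m) * P)) + (1 - m * E / (M - m)) / (P::real)"
  by (simp add: divide_simps) (simp add: algebra_simps)

lemma alg2: "M - m > 0 \<Longrightarrow> N > 0 \<Longrightarrow> r*E*W - (E+1)*m + M > (0::real) \<Longrightarrow>
  r*N*W*(E/((M-m)*(N*(r*E*W - (E+1)*m + M)/(M-m)))) + N*((1 - m*E/(M-m))/(N*(r*E*W - (E+1)*m + M)/(M-m))) = 1"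
  by (simp add: divide_simps) (simp add: algebra_simps)

lemma sum_prob:
  fixes \<epsilon> :: real and w :: "nat \<Rightarrow> real" and d k :: nat
  assumes "\<epsilon> > 0"
    and mono: "\<And>i j. 1 \<le> i \<Longrightarrow> i \<le> j \<Longrightarrow> j \<le> d \<Longrightarrow> w j \<le> w i"
    and k: "1 \<le> k" "k \<le> d - 1"
    and D: "wmax w d k > wmin w d k"
    and v: "is_vote d \<sigma>"
  shows "(\<Sum>S\<in>committees d k. prob_add \<epsilon> w d k (scored_vote w \<sigma>) S) = 1"
proof -
  define M where "M = wmax w d k"
  define m where "m = wmin w d k"
  define W where "W = Wtot w d"
  define E where "E = exp \<epsilon> - 1"
  define N where "N = real (d choose k)"
  define N1 where "N1 = real (d - 1 choose (k - 1))"
  define P where "P = Phi \<epsilon> w d k"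
  have E0: "E > 0" unfolding E_def using assms(1) by simp
  have D0: "M - m > 0" using D unfolding M_def m_def by simp
  have kd: "k \<le> d" "d \<ge> 1" using k by auto
  have N0: "N > 0" unfolding N_def using kd by simp
  have NN1: "real d * N1 = real k * N"
  proof -
    obtain d' k' where dk: "d = Suc d'" "k = Suc k'" using kd k by (cases d; cases k) auto
    show ?thesis unfolding N1_def N_def dk using Suc_times_binomial_eq[of d' k']
      by (simp only: diff_Suc_1 of_nat_mult[symmetric]) (simp add: mult.commute)
  qed
  have bnd: "real d * m \<le> real k * W" unfolding m_def W_def by (rule wmin_bound[OF mono k])
  have dpos: "real d > 0" using kd by simp
  have "real k / real d * W \<ge> m" using bnd dpos by (simp add: field_simps)
  then have inner: "real k / real d * E * W - exp \<epsilon> * m + M > 0"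
  proof -
    assume h: "real k / real d * W \<ge> m"
    have "real k / real d * E * W - exp \<epsilon> * m + M = E * (real k / real d * W - m) + (M - m)"
      unfolding E_def by (simp add: algebra_simps)
    moreover have "E * (real k / real d * W - m) \<ge> 0" using E0 h by simp
    ultimately show ?thesis using D0 by linarith
  qed
  have Pdef: "P = N * (real k / real d * E * W - exp \<epsilon> * m + M) / (M - m)"
    unfolding P_def Phi_def N_def E_def W_def m_def M_def by simp
  have P0: "P > 0" unfolding Pdef using N0 inner D0 by simp
  define v where "v = scored_vote w \<sigma>"
  have sv: "(\<Sum>j=1..d. v j) = W"
  proof -
    have b: "bij_betw \<sigma> {1..d} {1..d}" using v unfolding is_vote_def .
    have "(\<Sum>j=1..d. v j) = (\<Sum>j\<in>{1..d}. w (\<sigma> j))" unfolding v_def scored_vote_def by simp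
    also have "\<dots> = (\<Sum>j\<in>{1..d}. w j)" by (rule sum.reindex_bij_betw[OF b])
    finally show ?thesis unfolding W_def Wtot_def .
  qed
  have pa: "prob_add \<epsilon> w d k v S = (\<Sum>j\<in>S. v j) * (E / ((M - m) * P)) + (1 - m * E / (M - m)) / P" for S
    unfolding prob_add_def M_def[symmetric] m_def[symmetric] E_def[symmetric] P_def[symmetric]
    using D0 P0 by (rule alg1)
  have "(\<Sum>S\<in>committees d k. prob_add \<epsilon> w d k v S)
      = (\<Sum>S\<in>committees d k. \<Sum>j\<in>S. v j) * (E / ((M - m) * P)) + N * ((1 - m * E / (M - m)) / P)"
    unfolding pa by (simp only: sum.distrib sum_distrib_right[symmetric] sum_constant card_committees N_def)
  also have "(\<Sum>S\<in>committees d k. \<Sum>j\<in>S. v j) = N1 * W"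
    using sum_committees[OF k(1), where d=d and v=v] sv unfolding N1_def by simp
  also have "N1 = real k * N / real d" using NN1 dpos by (simp add: field_simps)
  finally have "(\<Sum>S\<in>committees d k. prob_add \<epsilon> w d k v S) =
      real k * N / real d * W * (E / ((M - m) * P)) + N * ((1 - m * E / (M - m)) / P)" .
  also have "\<dots> = 1"
  proof -
    have ee: "exp \<epsilon> = E + 1" unfolding E_def by simp
    have i2: "real k / real d * E * W - (E + 1) * m + M > 0" using inner unfolding ee .
    have "real k * N / real d = real k / real d * N" by simp
    then show ?thesis unfolding Pdef ee using alg2[OF D0 N0 i2] by simp
  qed
  finally show ?thesis unfolding v_def .
qed

theorem theorem6p5:
  fixes \<epsilon> :: real and w :: "nat \<Rightarrow> real" and d k n :: nat
  assumes "\<epsilon> > 0" and "n \<ge> 1"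
    and "\<And>i j. 1 \<le> i \<Longrightarrow> i \<le> j \<Longrightarrow> j \<le> d \<Longrightarrow> w j \<le> w i"
    and "1 \<le> k" and "k \<le> d - 1"
    and "wmax w d k > wmin w d k"
  shows "risk_MM \<epsilon> w d k n =
           (real k * \<bar>a_k \<epsilon> w d k - b_k \<epsilon> w d k\<bar> + real (d - k) * \<bar>b_k \<epsilon> w d k\<bar>) / real n
    \<and> (\<forall>\<sigma>. is_vote d \<sigma> \<longrightarrow> risk_EM \<epsilon> w d k n (scored_vote w \<sigma>) =
           (real k * \<bar>a_k \<epsilon> w d k - b_k \<epsilon> w d k\<bar> + real (d - k) * \<bar>b_k \<epsilon> w d k\<bar>) / real n)
    \<and> risk_DD \<epsilon> w d k \<le> 2 * real k * \<bar>a_k \<epsilon> w d k\<bar>"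
proof (intro conjI allI impI)
  define c where "c = real k * \<bar>a_k \<epsilon> w d k - b_k \<epsilon> w d k\<bar> + real (d - k) * \<bar>b_k \<epsilon> w d k\<bar>"
  have kd: "k \<le> d" using assms by auto
  have ne: "committees d k \<noteq> {}" using comm_nonempty[OF kd] by auto
  have "(\<lambda>x. l1 d x / real n) ` views \<epsilon> w d k = {c / real n}"
    unfolding views_def image_image using ne l1_committee[of _ d k \<epsilon> w] unfolding c_def by auto
  then show "risk_MM \<epsilon> w d k n = c / real n" unfolding risk_MM_def by simp
  fix \<sigma> assume v: "is_vote d \<sigma>"
  have "risk_EM \<epsilon> w d k n (scored_vote w \<sigma>) =
      (\<Sum>S\<in>committees d k. prob_add \<epsilon> w d k (scored_vote w \<sigma>) S) * (c / real n)"
    unfolding risk_EM_def sum_distrib_right using l1_committee[of _ d k \<epsilon> w] unfolding c_def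
    by (intro sum.cong) auto
  then show "risk_EM \<epsilon> w d k n (scored_vote w \<sigma>) = c / real n"
    using sum_prob[OF assms(1,3,4,5,6) v] by simp
next
  have kd: "k \<le> d" using assms by auto
  have ne: "committees d k \<noteq> {}" using comm_nonempty[OF kd] by auto
  have fin: "finite ((\<lambda>(x, y). l1 d (\<lambda>j. x j - y j)) ` (views \<epsilon> w d k \<times> views \<epsilon> w d k))"
    unfolding views_def using fin_comm by auto
  have ne2: "(\<lambda>(x, y). l1 d (\<lambda>j. x j - y j)) ` (views \<epsilon> w d k \<times> views \<epsilon> w d k) \<noteq> {}"
    unfolding views_def using ne by auto
  show "risk_DD \<epsilon> w d k \<le> 2 * real k * \<bar>a_k \<epsilon> w d k\<bar>"
    unfolding risk_DD_def using fin ne2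
    by (subst Max_le_iff) (auto simp: views_def intro: l1_diff)
qed

end
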